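(* Assume the standing hypotheses below. Let $T=R[\lambda]$ with a new indeterminate $\lambda$, and set $F_1=f(\lambda^4w,\lambda^3x,\lambda y,z)=\sum_i f^{(i,4d_1-i)}\lambda^i$, $G_1=g(\lambda^4w,\lambda^3x,\lambda y,z)=\sum_j g^{(j,4d_2-j)}\lambda^j$, and $\tilde F_1=F_1/\lambda^{i_{\min}}$, $\tilde G_1=G_1/\lambda^{j_{\min}}$. Then $$\sqrt{(\tilde F_1,\tilde G_1)T}=\sqrt{(\lambda,f_{\min},g_{\min})T}\cap\mathfrak pT.$$
   Context: Let $k$ be an algebraically closed field of characteristic zero, $R=k[w,x,y,z]$, and let $\mathfrak p\subseteq R$ be the homogeneous prime ideal of Macaulay's curve $C_4\subseteq\mathbb P^3_k$, the curve with parametrization $[s^4:s^3t:st^3:t^4]$. Endow $R$ with the bigrading $\deg w=(4,0)$, $\deg x=(3,1)$, $\deg y=(1,3)$, $\deg z=(0,4)$; $\mathfrak p$ is bihomogeneous. Standing hypothesis: $f,g\in\mathfrak p$ are homogeneous (in the usual grading) of degrees $d_1,d_2$ with $\sqrt{(f,g)R}=\mathfrak p$. Write $f=\sum_{i=i_{\min}}^{i_{\max}} f^{(i,4d_1-i)}$ and $g=\sum_{j=j_{\min}}^{j_{\max}} g^{(j,4d_2-j)}$ as sums of bihomogeneous components, where $f^{(i,4d_1-i)}$ is the component of bidegree $(i,4d_1-i)$ and $i_{\min},i_{\max},j_{\min},j_{\max}$ are chosen so that $f_{\min}:=f^{(i_{\min},4d_1-i_{\min})}$, $f_{\max}:=f^{(i_{\max},4d_1-i_{\max})}$,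 $g_{\min}:=g^{(j_{\min},4d_2-j_{\min})}$, $g_{\max}:=g^{(j_{\max},4d_2-j_{\max})}$ are all nonzero. *)

theory Defs
  imports "HOL-Library.Poly_Mapping" "HOL-Computational_Algebra.Polynomial"
begin

datatype var = W | X | Y | Z

text \<open>R = k[w,x,y,z]: finitely supported functions from monomials (exponent vectors) to k.\<close>
type_synonym 'a mpoly4 = "(var \<Rightarrow>\<^sub>0 nat) \<Rightarrow>\<^sub>0 'a"

definition mpeval :: "'a::zero mpoly4 \<Rightarrow> ('a \<Rightarrow> 'b::comm_ring_1) \<Rightarrow> (var \<Rightarrow> 'b) \<Rightarrow> 'b" where
  "mpeval p c phi = (\<Sum>m\<in>Poly_Mapping.keys p. c (Poly_Mapping.lookup p m) * (\<Prod>v\<in>Poly_Mapping.keys (m::var \<Rightarrow>\<^sub>0 nat). phi v ^ Poly_Mapping.lookup m v))"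

definition Var :: "var \<Rightarrow> 'a::{zero,one} mpoly4" where
  "Var v = Poly_Mapping.single (Poly_Mapping.single v 1) 1"

definition mdeg :: "(var \<Rightarrow>\<^sub>0 nat) \<Rightarrow> nat" where
  "mdeg m = (\<Sum>v\<in>Poly_Mapping.keys m. Poly_Mapping.lookup m v)"

definition homogeneous :: "'a::zero mpoly4 \<Rightarrow> nat \<Rightarrow> bool" where
  "homogeneous p d \<longleftrightarrow> (\<forall>m\<in>Poly_Mapping.keys p. mdeg m = d)"

text \<open>First component of the bidegree: deg w = (4,0), deg x = (3,1), deg y = (1,3), deg z = (0,4).\<close>
definition wt :: "var \<Rightarrow> nat" where
  "wt v = (case v of W \<Rightarrow> 4 | X \<Rightarrow> 3 | Y \<Rightarrow> 1 | Z \<Rightarrow> 0)"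

definition bideg1 :: "(var \<Rightarrow>\<^sub>0 nat) \<Rightarrow> nat" where
  "bideg1 m = (\<Sum>v\<in>Poly_Mapping.keys m. wt v * Poly_Mapping.lookup m v)"

text \<open>Bihomogeneous component of p of bidegree (i, 4d - i) (for p homogeneous of degree d).\<close>
definition bicomp :: "'a::zero mpoly4 \<Rightarrow> nat \<Rightarrow> 'a mpoly4" where
  "bicomp p i = Abs_poly_mapping (\<lambda>m. if bideg1 m = i then Poly_Mapping.lookup p m else 0)"

definition gen_ideal :: "'b::comm_ring_1 set \<Rightarrow> 'b set" where
  "gen_ideal S = {a. \<exists>F c. finite F \<and> F \<subseteq> S \<and> a = (\<Sum>s\<in>F. c s * s)}"

definition radical :: "'b::comm_ring_1 set \<Rightarrow> 'b set" where
  "radical I = {a. \<exists>n. a ^ n \<in> I}"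

text \<open>The homogeneous ideal of Macaulay's curve C4 = {[s^4:s^3t:st^3:t^4]}:
  all polynomials vanishing on its affine cone.\<close>
definition curve_point :: "'a::comm_ring_1 \<Rightarrow> 'a \<Rightarrow> var \<Rightarrow> 'a" where
  "curve_point s t v = (case v of W \<Rightarrow> s^4 | X \<Rightarrow> s^3 * t | Y \<Rightarrow> s * t^3 | Z \<Rightarrow> t^4)"

definition macaulay_ideal :: "'a::comm_ring_1 mpoly4 set" where
  "macaulay_ideal = {p. \<forall>s t. mpeval p id (curve_point s t) = 0}"

text \<open>T = R[lambda], lambda = [:0,1:]. The substitution
  p(lambda^4 w, lambda^3 x, lambda y, z) in T.\<close>
definition lam_subst :: "'a::comm_ring_1 mpoly4 \<Rightarrow> 'a mpoly4 poly" where
  "lam_subst p = mpeval p (\<lambda>a. [:Poly_Mapping.single 0 a:]) (\<lambda>v. [:0,1:] ^ wt v * [:Var v:])"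

definition alg_closed :: "'a::field itself \<Rightarrow> bool" where
  "alg_closed _ \<longleftrightarrow> (\<forall>q::'a poly. degree q > 0 \<longrightarrow> (\<exists>x. poly q x = 0))"

end

theory Submission
  imports Defs
begin


instance var :: finite
proof
  have "(UNIV::var set) = {W,X,Y,Z}" using var.exhaust by blast
  then show "finite (UNIV::var set)" unfolding \<open>UNIV = _\<close> by simp
qed

definition mmono :: "(var \<Rightarrow> 'b::comm_ring_1) \<Rightarrow> (var \<Rightarrow>\<^sub>0 nat) \<Rightarrow> 'b" where
  "mmono \<phi> m = (\<Prod>v\<in>UNIV. \<phi> v ^ Poly_Mapping.lookup m v)"

lemma mmono_keys: "(\<Prod>v\<in>Poly_Mapping.keys m. \<phi> v ^ Poly_Mapping.lookup m v) = mmono \<phi> m"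
  unfolding mmono_def by (rule prod.mono_neutral_left) (auto simp: in_keys_iff)

lemma mmono_add: "mmono \<phi> (m + m') = mmono \<phi> m * mmono \<phi> m'"
  by (simp add: mmono_def lookup_add power_add prod.distrib)

lemma mmono_times: "mmono (\<lambda>v. \<alpha> v * \<beta> v) m = mmono \<alpha> m * mmono \<beta> m"
  by (simp add: mmono_def power_mult_distrib prod.distrib)

lemma bideg1_alt: "bideg1 m = (\<Sum>v\<in>UNIV. wt v * Poly_Mapping.lookup m v)"
  unfolding bideg1_def by (rule sum.mono_neutral_left) (auto simp: in_keys_iff)

lemma mmono_wt: "mmono (\<lambda>v. x ^ wt v) m = x ^ bideg1 m"
  by (simp add: mmono_def bideg1_alt power_sum power_mult)

definition hom0 :: "('a::comm_ring_1 \<Rightarrow> 'b::comm_ring_1) \<Rightarrow> bool" where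
  "hom0 c \<longleftrightarrow> c 0 = 0 \<and> c 1 = 1 \<and> (\<forall>a b. c (a+b) = c a + c b) \<and> (\<forall>a b. c (a*b) = c a * c b)"

lemma hom0_prod: "hom0 c \<Longrightarrow> c (\<Prod>v\<in>A. f v) = (\<Prod>v\<in>A. c (f v))"
  by (induction A rule: infinite_finite_induct) (auto simp: hom0_def)

lemma hom0_power: "hom0 c \<Longrightarrow> c (x ^ n) = c x ^ n"
  by (induction n) (auto simp: hom0_def)

lemma hom0_sum: "hom0 c \<Longrightarrow> c (\<Sum>v\<in>A. f v) = (\<Sum>v\<in>A. c (f v))"
  by (induction A rule: infinite_finite_induct) (auto simp: hom0_def)

lemma mmono_hom: "hom0 c \<Longrightarrow> mmono (\<lambda>v. c (\<phi> v)) m = c (mmono \<phi> m)"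
  by (simp add: mmono_def hom0_prod hom0_power)

lemma mpeval_alt: "mpeval p c \<phi> = (\<Sum>m\<in>Poly_Mapping.keys p. c (Poly_Mapping.lookup p m) * mmono \<phi> m)"
  by (simp add: mpeval_def mmono_keys)

lemma mpeval_superset: assumes "c 0 = 0" "finite K" "Poly_Mapping.keys p \<subseteq> K"
  shows "mpeval p c \<phi> = (\<Sum>m\<in>K. c (Poly_Mapping.lookup p m) * mmono \<phi> m)"
  unfolding mpeval_alt using assms by (intro sum.mono_neutral_left) (auto simp: in_keys_iff)

lemma mpeval_add: assumes "hom0 c" shows "mpeval (p+q) c \<phi> = mpeval p c \<phi> + mpeval q c \<phi>"
proof -
  let ?K = "Poly_Mapping.keys p \<union> Poly_Mapping.keys q"
  have c0: "c 0 = 0" using assms hom0_def by auto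
  have "mpeval (p+q) c \<phi> = (\<Sum>m\<in>?K. c (Poly_Mapping.lookup (p+q) m) * mmono \<phi> m)"
    using c0 keys_add[of p q] by (intro mpeval_superset) auto
  also have "\<dots> = (\<Sum>m\<in>?K. c (Poly_Mapping.lookup p m) * mmono \<phi> m) + (\<Sum>m\<in>?K. c (Poly_Mapping.lookup q m) * mmono \<phi> m)"
    using assms by (simp add: hom0_def lookup_add distrib_right sum.distrib)
  also have "\<dots> = mpeval p c \<phi> + mpeval q c \<phi>"
    using c0 mpeval_superset[of c ?K p \<phi>] mpeval_superset[of c ?K q \<phi>] by simp
  finally show ?thesis .
qed

lemma mpeval_zero: "mpeval 0 c \<phi> = 0" by (simp add: mpeval_def)

lemma mpeval_sum: assumes "hom0 c" shows "mpeval (\<Sum>i\<in>A. p i) c \<phi> = (\<Sum>i\<in>A. mpeval (p i) c \<phi>)"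
  by (induction A rule: infinite_finite_induct) (simp_all add: mpeval_zero mpeval_add[OF assms])

lemma mpeval_single: assumes "c 0 = 0" shows "mpeval (Poly_Mapping.single m a) c \<phi> = c a * mmono \<phi> m"
  using assms by (simp add: mpeval_alt)

lemma pm_sum_single: "p = (\<Sum>m\<in>Poly_Mapping.keys p. Poly_Mapping.single m (Poly_Mapping.lookup p m))"
proof (rule poly_mapping_eqI)
  fix k
  show "Poly_Mapping.lookup p k = Poly_Mapping.lookup (\<Sum>m\<in>Poly_Mapping.keys p. Poly_Mapping.single m (Poly_Mapping.lookup p m)) k"
    by (simp add: lookup_sum lookup_single when_def in_keys_iff)
qed

lemma mpeval_mult: assumes "hom0 c" shows "mpeval (p*q) c \<phi> = mpeval p c \<phi> * mpeval q c \<phi>"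
proof -
  have c0: "c 0 = 0" using assms hom0_def by auto
  have "p*q = (\<Sum>m\<in>Poly_Mapping.keys p. Poly_Mapping.single m (Poly_Mapping.lookup p m)) *
     (\<Sum>m\<in>Poly_Mapping.keys q. Poly_Mapping.single m (Poly_Mapping.lookup q m))"
    by (simp only: pm_sum_single[symmetric])
  also have "\<dots> = (\<Sum>m\<in>Poly_Mapping.keys p. \<Sum>m'\<in>Poly_Mapping.keys q.
      Poly_Mapping.single (m+m') (Poly_Mapping.lookup p m * Poly_Mapping.lookup q m'))"
    by (simp add: sum_distrib_left sum_distrib_right mult_single; rule sum.swap)
  finally have "mpeval (p*q) c \<phi> = (\<Sum>m\<in>Poly_Mapping.keys p. \<Sum>m'\<in>Poly_Mapping.keys q.
      c (Poly_Mapping.lookup p m) * mmono \<phi> m * (c (Poly_Mapping.lookup q m') * mmono \<phi> m'))"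
    using assms c0 by (simp add: mpeval_sum mpeval_single mmono_add hom0_def mult_ac)
  also have "\<dots> = mpeval p c \<phi> * mpeval q c \<phi>"
    by (simp add: mpeval_alt sum_product)
  finally show ?thesis .
qed

lemma mpeval_one: assumes "hom0 c" shows "mpeval 1 c \<phi> = 1"
proof -
  have c0: "c 0 = 0" using assms hom0_def by auto
  have "mpeval 1 c \<phi> = mpeval (Poly_Mapping.single 0 1) c \<phi>" by simp
  also have "\<dots> = c 1 * mmono \<phi> 0" using c0 by (rule mpeval_single)
  also have "\<dots> = 1" using assms by (simp add: hom0_def mmono_def)
  finally show ?thesis .
qed

lemma mpeval_power: assumes "hom0 c" shows "mpeval (p^n) c \<phi> = mpeval p c \<phi> ^ n"
  by (induction n) (simp_all add: mpeval_one mpeval_mult assms)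



definition isideal :: "'b::comm_ring_1 set \<Rightarrow> bool" where
  "isideal K \<longleftrightarrow> 0 \<in> K \<and> (\<forall>a\<in>K. \<forall>b\<in>K. a + b \<in> K) \<and> (\<forall>r. \<forall>a\<in>K. r * a \<in> K)"

lemma isideal_sum: "isideal K \<Longrightarrow> (\<And>i. i \<in> A \<Longrightarrow> f i \<in> K) \<Longrightarrow> sum f A \<in> K"
  by (induction A rule: infinite_finite_induct) (auto simp: isideal_def)

lemma isideal_add: "isideal K \<Longrightarrow> a \<in> K \<Longrightarrow> b \<in> K \<Longrightarrow> a + b \<in> K"
  by (auto simp: isideal_def)

lemma isideal_mult: "isideal K \<Longrightarrow> a \<in> K \<Longrightarrow> r * a \<in> K"
  by (auto simp: isideal_def)

lemma isideal_mult2: "isideal K \<Longrightarrow> a \<in> K \<Longrightarrow> a * r \<in> K"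
  using isideal_mult[of K a r] by (simp add: mult.commute)

lemma isideal_neg: "isideal K \<Longrightarrow> a \<in> K \<Longrightarrow> - a \<in> K"
  using isideal_mult[of K a "-1"] by simp

lemma isideal_diff: "isideal K \<Longrightarrow> a \<in> K \<Longrightarrow> b \<in> K \<Longrightarrow> a - b \<in> K"
  using isideal_add[of K a "-b"] isideal_neg[of K b] by simp

lemma gen_ideal_least:
  assumes "isideal K" "S \<subseteq> K" shows "gen_ideal S \<subseteq> K"
proof
  fix a assume "a \<in> gen_ideal S"
  then obtain F c where "finite F" "F \<subseteq> S" "a = (\<Sum>s\<in>F. c s * s)" unfolding gen_ideal_def by blast
  then show "a \<in> K" using assms by (auto intro!: isideal_sum isideal_mult)
qed

lemma gen_ideal_base: "s \<in> S \<Longrightarrow> s \<in> gen_ideal S"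
  unfolding gen_ideal_def by (rule CollectI, rule exI[of _ "{s}"], rule exI[of _ "\<lambda>_. 1"]) simp

lemma sum_if_extend:
  assumes "finite F2"
  shows "(\<Sum>s\<in>F1. c1 s * s) = (\<Sum>s\<in>F1 \<union> F2. (if s \<in> F1 then c1 s else 0) * (s::'b::comm_ring_1))"
proof (cases "finite F1")
  case True
  have "(\<Sum>s\<in>F1 \<union> F2. (if s \<in> F1 then c1 s else 0) * s) = (\<Sum>s\<in>F1. (if s \<in> F1 then c1 s else 0) * s)"
    by (rule sum.mono_neutral_right) (use True assms in auto)
  also have "\<dots> = (\<Sum>s\<in>F1. c1 s * s)" by (rule sum.cong) auto
  finally show ?thesis by simp
next
  case False then show ?thesis by simp
qed

lemma gen_idealI: "finite F \<Longrightarrow> F \<subseteq> S \<Longrightarrow> a = (\<Sum>s\<in>F. c s * s) \<Longrightarrow> a \<in> gen_ideal S"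
  unfolding gen_ideal_def by (intro CollectI exI conjI)

lemma gen_idealE: assumes "a \<in> gen_ideal S"
  obtains F c where "finite F" "F \<subseteq> S" "a = (\<Sum>s\<in>F. c s * s)"
  using assms unfolding gen_ideal_def mem_Collect_eq by (elim exE conjE) simp

lemma gen_ideal_isideal: "isideal (gen_ideal S)"
  unfolding isideal_def
proof (intro conjI ballI allI)
  show "0 \<in> gen_ideal S" by (rule gen_idealI[of "{}"]) simp_all
next
  fix a b assume a: "a \<in> gen_ideal S" and b: "b \<in> gen_ideal S"
  obtain F1 c1 where h1: "finite F1" "F1 \<subseteq> S" "a = (\<Sum>s\<in>F1. c1 s * s)" using gen_idealE[OF a] .
  obtain F2 c2 where h2: "finite F2" "F2 \<subseteq> S" "b = (\<Sum>s\<in>F2. c2 s * s)" using gen_idealE[OF b] .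
  define c where "c s = (if s \<in> F1 then c1 s else 0) + (if s \<in> F2 then c2 s else 0)" for s
  have "a = (\<Sum>s\<in>F1 \<union> F2. (if s \<in> F1 then c1 s else 0) * s)"
    unfolding h1(3) by (rule sum_if_extend[OF h2(1)])
  moreover have "b = (\<Sum>s\<in>F1 \<union> F2. (if s \<in> F2 then c2 s else 0) * s)"
    unfolding h2(3) Un_commute[of F1 F2] by (rule sum_if_extend[OF h1(1)])
  ultimately have "a + b = (\<Sum>s\<in>F1 \<union> F2. c s * s)"
    unfolding c_def distrib_right sum.distrib by (rule arg_cong2[where f="(+)"])
  moreover have "finite (F1 \<union> F2)" "F1 \<union> F2 \<subseteq> S" using h1 h2 by auto
  ultimately show "a + b \<in> gen_ideal S" by (intro gen_idealI)
next
  fix r a assume a: "a \<in> gen_ideal S"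
  obtain F c where h: "finite F" "F \<subseteq> S" "a = (\<Sum>s\<in>F. c s * s)" using gen_idealE[OF a] .
  have "r * a = (\<Sum>s\<in>F. (r * c s) * s)" unfolding h(3) by (simp add: sum_distrib_left mult.assoc)
  then show "r * a \<in> gen_ideal S" using h(1,2) by (intro gen_idealI)
qed

lemma radical_sub: "K \<subseteq> radical K"
  unfolding radical_def by (auto intro: exI[of _ 1])

lemma radical_isideal: assumes K: "isideal K" shows "isideal (radical K)"
  unfolding isideal_def
proof (intro conjI ballI allI)
  show "0 \<in> radical K" using K unfolding radical_def isideal_def by (auto intro: exI[of _ 1])
next
  fix a b assume "a \<in> radical K" "b \<in> radical K"
  then obtain m n where mn: "a ^ m \<in> K" "b ^ n \<in> K" unfolding radical_def by blast
  have "(a + b) ^ (m + n) = (\<Sum>k\<le>m+n. of_nat (m + n choose k) * a ^ k * b ^ (m + n - k))"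
    by (rule binomial_ring)
  also have "\<dots> \<in> K"
  proof (rule isideal_sum[OF K])
    fix k assume "k \<in> {..m+n}"
    show "of_nat (m + n choose k) * a ^ k * b ^ (m + n - k) \<in> K"
    proof (cases "m \<le> k")
      case True
      then have e: "a ^ k = a ^ m * a ^ (k - m)" by (simp add: power_add[symmetric])
      have "of_nat (m + n choose k) * (a ^ m * a ^ (k - m)) * b ^ (m + n - k) \<in> K"
        using mn K by (intro isideal_mult2 isideal_mult)
      then show ?thesis by (simp only: e)
    next
      case False
      then have "m + n - k = n + (m - k)" by simp
      then have e: "b ^ (m + n - k) = b ^ n * b ^ (m - k)" by (simp add: power_add)
      have "of_nat (m + n choose k) * a ^ k * (b ^ n * b ^ (m - k)) \<in> K"
        using mn K by (intro isideal_mult2 isideal_mult)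
      then show ?thesis by (simp only: e)
    qed
  qed
  finally show "a + b \<in> radical K" unfolding radical_def by blast
next
  fix r a assume "a \<in> radical K"
  then obtain m where "a ^ m \<in> K" unfolding radical_def by blast
  then have "(r * a) ^ m \<in> K" using K by (simp add: power_mult_distrib isideal_mult)
  then show "r * a \<in> radical K" unfolding radical_def by blast
qed

lemma pow_diff_ideal: assumes K: "isideal K" and "x - y \<in> K" shows "x ^ k - y ^ k \<in> K"
proof (induction k)
  case 0 then show ?case using K by (simp add: isideal_def)
next
  case (Suc k)
  have "x ^ Suc k - y ^ Suc k = x * (x ^ k - y ^ k) + y ^ k * (x - y)"
    by (simp add: algebra_simps)
  then show ?case using Suc assms by (simp add: isideal_add isideal_mult)
qed



abbreviation LL :: "'a::comm_ring_1 mpoly4 poly" where "LL \<equiv> [:0,1:]"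

lemma hom0_const: "hom0 (\<lambda>x::'b::comm_ring_1. [:x:])"
  by (simp add: hom0_def)

lemma const_mult: "[:x:] * [:y:] = [:x * y:]" for x y :: "'b::comm_ring_1" by (simp add: mult.commute)

lemma hom0_cL: "hom0 (\<lambda>a::'a::comm_ring_1. [:Poly_Mapping.single (0::var\<Rightarrow>\<^sub>0nat) a:])"
  unfolding hom0_def
proof (intro conjI allI)
  fix a b :: 'a
  show "[:Poly_Mapping.single (0::var\<Rightarrow>\<^sub>0nat) (a * b):] = [:Poly_Mapping.single 0 a:] * [:Poly_Mapping.single 0 b:]"
    by (simp only: const_mult mult_single add_0)
qed (simp_all add: single_add)

lemma hom0_id: "hom0 id" by (simp add: hom0_def)

lemma lam_subst_add: "lam_subst (p + q) = lam_subst p + lam_subst q"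
  unfolding lam_subst_def by (rule mpeval_add[OF hom0_cL])
lemma lam_subst_mult: "lam_subst (p * q) = lam_subst p * lam_subst q"
  unfolding lam_subst_def by (rule mpeval_mult[OF hom0_cL])
lemma lam_subst_power: "lam_subst (p ^ n) = lam_subst p ^ n"
  unfolding lam_subst_def by (rule mpeval_power[OF hom0_cL])
lemma lam_subst_zero: "lam_subst 0 = 0"
  unfolding lam_subst_def by (rule mpeval_zero)

lemma Var_power: "(Var v :: 'a::comm_ring_1 mpoly4) ^ n = Poly_Mapping.single (Poly_Mapping.single v n) 1"
proof (induction n)
  case 0 then show ?case by simp
next
  case (Suc n)
  have "Poly_Mapping.single v (Suc n) = Poly_Mapping.single v 1 + Poly_Mapping.single v n"
    by (simp add: single_add[symmetric])
  then show ?case using Suc by (simp add: Var_def mult_single)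
qed

lemma prod_single: "(\<Prod>v\<in>A. (Poly_Mapping.single (g v) 1 :: 'a::comm_ring_1 mpoly4)) = Poly_Mapping.single (\<Sum>v\<in>A. g v) 1"
  by (induction A rule: infinite_finite_induct) (simp_all add: mult_single)

lemma monomial_sum: "(\<Sum>v\<in>UNIV. Poly_Mapping.single v (Poly_Mapping.lookup m v)) = (m :: var \<Rightarrow>\<^sub>0 nat)"
  by (rule poly_mapping_eqI) (simp add: lookup_sum lookup_single when_def)

lemma mmono_Var: "mmono Var m = (Poly_Mapping.single m 1 :: 'a::comm_ring_1 mpoly4)"
  by (simp add: mmono_def Var_power prod_single monomial_sum)

lemma cL_mmono: "[:Poly_Mapping.single 0 a:] * mmono (\<lambda>v. [:0,1:] ^ wt v * [:Var v:]) m
   = (LL :: 'a::comm_ring_1 mpoly4 poly) ^ bideg1 m * [:Poly_Mapping.single m a:]"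
proof -
  have hv: "mmono (\<lambda>v. [:Var v:]) m = [:mmono Var m:]"
    by (rule mmono_hom[OF hom0_const])
  have "[:Poly_Mapping.single 0 a:] * mmono (\<lambda>v. [:0,1:] ^ wt v * [:Var v:]) m
     = [:Poly_Mapping.single 0 a:] * ((LL :: 'a mpoly4 poly) ^ bideg1 m * [:Poly_Mapping.single m 1:])"
    by (simp only: hv mmono_times mmono_wt mmono_Var)
  also have "\<dots> = LL ^ bideg1 m * ([:Poly_Mapping.single 0 a:] * [:Poly_Mapping.single m 1:])"
    by (simp only: mult_ac)
  also have "[:Poly_Mapping.single 0 a:] * [:Poly_Mapping.single m 1:] = [:Poly_Mapping.single m a:]"
    by (simp add: mult_single)
  finally show ?thesis .
qed

lemma lam_subst_alt: "lam_subst (p :: 'a::comm_ring_1 mpoly4) =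
   (\<Sum>m\<in>Poly_Mapping.keys p. LL ^ bideg1 m * [:Poly_Mapping.single m (Poly_Mapping.lookup p m):])"
  unfolding lam_subst_def mpeval_alt by (rule sum.cong[OF refl]) (rule cL_mmono)

lemma const_sum: "[:sum f A:] = (\<Sum>x\<in>A. [:f x:])"
proof (induction A rule: infinite_finite_induct)
  case (insert x F)
  have "[:sum f (insert x F):] = [:f x:] + [:sum f F:]" using insert.hyps by simp
  then show ?case using insert by simp
qed simp_all

lemma lookup_bicomp: "Poly_Mapping.lookup (bicomp p i) m = (if bideg1 m = i then Poly_Mapping.lookup p m else 0)"
proof -
  have "finite {m. (if bideg1 m = i then Poly_Mapping.lookup p m else 0) \<noteq> 0}"
    by (rule finite_subset[OF _ finite_lookup[of p]]) auto
  then show ?thesis unfolding bicomp_def by simp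
qed

lemma keys_bicomp: "m \<in> Poly_Mapping.keys (bicomp p i) \<longleftrightarrow> m \<in> Poly_Mapping.keys p \<and> bideg1 m = i"
  by (simp add: in_keys_iff lookup_bicomp)

lemma lam_subst_bicomp: "lam_subst (bicomp (p :: 'a::comm_ring_1 mpoly4) i) = LL ^ i * [:bicomp p i:]"
proof -
  have "lam_subst (bicomp p i) = (\<Sum>m\<in>Poly_Mapping.keys (bicomp p i). LL ^ i *
      [:Poly_Mapping.single m (Poly_Mapping.lookup (bicomp p i) m):])"
    unfolding lam_subst_alt by (rule sum.cong) (auto simp: keys_bicomp)
  also have "\<dots> = LL ^ i * [:\<Sum>m\<in>Poly_Mapping.keys (bicomp p i). Poly_Mapping.single m (Poly_Mapping.lookup (bicomp p i) m):]"
    by (simp only: const_sum sum_distrib_left)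
  also have "\<dots> = LL ^ i * [:bicomp p i:]" by (simp only: pm_sum_single[symmetric])
  finally show ?thesis .
qed

lemma sum_bicomp: "p = (\<Sum>i\<in>bideg1 ` Poly_Mapping.keys p. bicomp p i)"
proof (rule poly_mapping_eqI)
  fix m
  show "Poly_Mapping.lookup p m = Poly_Mapping.lookup (\<Sum>i\<in>bideg1 ` Poly_Mapping.keys p. bicomp p i) m"
    by (auto simp: lookup_sum lookup_bicomp in_keys_iff)
qed

lemma lam_subst_decomp: "lam_subst (p :: 'a::comm_ring_1 mpoly4) = (\<Sum>i\<in>bideg1 ` Poly_Mapping.keys p. LL ^ i * [:bicomp p i:])"
proof -
  have "lam_subst p = lam_subst (\<Sum>i\<in>bideg1 ` Poly_Mapping.keys p. bicomp p i)"
    by (subst sum_bicomp[of p]) (rule refl)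
  also have "\<dots> = (\<Sum>i\<in>bideg1 ` Poly_Mapping.keys p. lam_subst (bicomp p i))"
    unfolding lam_subst_def by (rule mpeval_sum[OF hom0_cL])
  finally show ?thesis by (simp add: lam_subst_bicomp)
qed

lemma curve_scale: "curve_point (\<mu> * s) t v = \<mu> ^ wt v * curve_point s t v"
  by (cases v) (simp_all add: curve_point_def wt_def power_mult_distrib)

lemma ev_bicomp_scale:
  "mpeval (bicomp q j) id (curve_point (\<mu> * s) t) = \<mu> ^ j * mpeval (bicomp q j) id (curve_point s t)"
proof -
  have e: "mmono (curve_point (\<mu> * s) t) m = \<mu> ^ bideg1 m * mmono (curve_point s t) m" for m
  proof -
    have "curve_point (\<mu> * s) t = (\<lambda>v. \<mu> ^ wt v * curve_point s t v)" by (rule ext, rule curve_scale)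
    then show ?thesis by (simp only: mmono_times mmono_wt)
  qed
  show ?thesis unfolding mpeval_alt sum_distrib_left
    by (rule sum.cong[OF refl]) (simp add: e keys_bicomp)
qed

lemma mac_isideal: "isideal (macaulay_ideal :: 'a::comm_ring_1 mpoly4 set)"
  unfolding isideal_def macaulay_ideal_def
  by (simp add: mpeval_zero mpeval_add[OF hom0_id] mpeval_mult[OF hom0_id])

lemma bicomp_in_mac:
  assumes q: "(q :: 'a::field_char_0 mpoly4) \<in> macaulay_ideal"
  shows "bicomp q i \<in> macaulay_ideal"
  unfolding macaulay_ideal_def
proof (intro CollectI allI)
  fix s t :: 'a
  let ?B = "bideg1 ` Poly_Mapping.keys q"
  let ?e = "\<lambda>j. mpeval (bicomp q j) id (curve_point s t)"
  define Q where "Q = (\<Sum>j\<in>?B. monom (?e j) j)"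
  have "poly Q \<mu> = 0" for \<mu>
  proof -
    have "poly Q \<mu> = (\<Sum>j\<in>?B. mpeval (bicomp q j) id (curve_point (\<mu> * s) t))"
      by (simp add: Q_def poly_sum poly_monom ev_bicomp_scale mult_ac)
    also have "\<dots> = mpeval (\<Sum>j\<in>?B. bicomp q j) id (curve_point (\<mu> * s) t)"
      by (rule mpeval_sum[OF hom0_id, symmetric])
    also have "\<dots> = 0" using q by (simp only: sum_bicomp[symmetric]) (simp add: macaulay_ideal_def)
    finally show ?thesis .
  qed
  then have "Q = 0" using poly_all_0_iff_0 by blast
  then have "coeff Q i = 0" by simp
  then have ci: "i \<in> ?B \<Longrightarrow> ?e i = 0" by (simp add: Q_def coeff_sum)
  show "mpeval (bicomp q i) id (curve_point s t) = 0"
  proof (cases "i \<in> ?B")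
    case True then show ?thesis using ci by simp
  next
    case False
    then have "bicomp q i = 0"
      by (intro poly_mapping_eqI) (auto simp: lookup_bicomp in_keys_iff)
    then show ?thesis by (simp add: mpeval_zero)
  qed
qed

lemma map_poly_hom_mult: assumes "hom0 e" shows "map_poly e (p * q) = map_poly e p * map_poly e q"
proof (rule poly_eqI)
  fix n
  have e0: "e 0 = 0" using assms hom0_def by auto
  show "coeff (map_poly e (p * q)) n = coeff (map_poly e p * map_poly e q) n"
    using assms by (simp add: coeff_map_poly e0 coeff_mult hom0_sum) (simp add: hom0_def)
qed

lemma map_poly_hom_one: assumes "hom0 e" shows "map_poly e 1 = 1"
proof (rule poly_eqI)
  fix n
  have e0: "e 0 = 0" using assms hom0_def by auto
  show "coeff (map_poly e 1) n = coeff 1 n" using assms by (simp add: coeff_map_poly e0 hom0_def)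
qed

lemma map_poly_hom_power: assumes "hom0 e" shows "map_poly e (p ^ n) = map_poly e p ^ n"
  by (induction n) (simp_all add: map_poly_hom_one map_poly_hom_mult assms)



lemma Pchar: "(h :: 'a::comm_ring_1 mpoly4 poly) \<in> gen_ideal ((\<lambda>p. [:p:]) ` macaulay_ideal)
   \<longleftrightarrow> (\<forall>k. coeff h k \<in> macaulay_ideal)"
proof
  assume "h \<in> gen_ideal ((\<lambda>p. [:p:]) ` macaulay_ideal)"
  moreover have "gen_ideal ((\<lambda>p. [:p:]) ` macaulay_ideal) \<subseteq> {h. \<forall>k. coeff h k \<in> (macaulay_ideal :: 'a mpoly4 set)}"
  proof (rule gen_ideal_least)
    show "isideal {h. \<forall>k. coeff h k \<in> (macaulay_ideal :: 'a mpoly4 set)}"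
      unfolding isideal_def
    proof (intro conjI ballI allI; clarsimp)
      show "\<And>k. 0 \<in> macaulay_ideal" using mac_isideal by (auto simp: isideal_def)
      show "\<And>a b k. \<forall>k. coeff a k \<in> macaulay_ideal \<Longrightarrow> \<forall>k. coeff b k \<in> macaulay_ideal \<Longrightarrow>
          coeff a k + coeff b k \<in> macaulay_ideal" using mac_isideal by (auto simp: isideal_def)
      show "\<And>r a k. \<forall>k. coeff a k \<in> macaulay_ideal \<Longrightarrow> coeff (r * a) k \<in> macaulay_ideal"
        by (simp add: coeff_mult isideal_sum[OF mac_isideal] isideal_mult[OF mac_isideal])
    qed
    show "(\<lambda>p. [:p:]) ` macaulay_ideal \<subseteq> {h. \<forall>k. coeff h k \<in> (macaulay_ideal :: 'a mpoly4 set)}"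
    proof clarsimp
      fix q k assume "(q :: 'a mpoly4) \<in> macaulay_ideal"
      then show "coeff [:q:] k \<in> macaulay_ideal"
        using mac_isideal by (cases k) (auto simp: isideal_def)
    qed
  qed
  ultimately show "\<forall>k. coeff h k \<in> macaulay_ideal" by blast
next
  assume h: "\<forall>k. coeff h k \<in> macaulay_ideal"
  have "h = (\<Sum>i\<le>degree h. LL ^ i * [:coeff h i:])"
    by (subst poly_as_sum_of_monoms[symmetric]) (simp add: monom_altdef mult.commute)
  also have "\<dots> \<in> gen_ideal ((\<lambda>p. [:p:]) ` macaulay_ideal)"
    using h by (intro isideal_sum[OF gen_ideal_isideal] isideal_mult[OF gen_ideal_isideal] gen_ideal_base) auto
  finally show "h \<in> gen_ideal ((\<lambda>p. [:p:]) ` macaulay_ideal)" .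
qed

lemma P_radical:
  assumes "(h :: 'a::field_char_0 mpoly4 poly) ^ n \<in> gen_ideal ((\<lambda>p. [:p:]) ` macaulay_ideal)"
  shows "h \<in> gen_ideal ((\<lambda>p. [:p:]) ` macaulay_ideal)"
  unfolding Pchar
proof (intro allI)
  fix k
  have hn: "\<forall>k. coeff (h ^ n) k \<in> macaulay_ideal" using assms Pchar by blast
  show "coeff h k \<in> macaulay_ideal"
    unfolding macaulay_ideal_def
  proof (intro CollectI allI)
    fix s t :: 'a
    let ?e = "\<lambda>q. mpeval q id (curve_point s t)"
    have he: "hom0 ?e" by (simp add: hom0_def mpeval_zero mpeval_add[OF hom0_id] mpeval_mult[OF hom0_id] mpeval_one[OF hom0_id])
    have e0: "?e 0 = 0" by (simp add: mpeval_zero)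
    have "map_poly ?e (h ^ n) = 0"
      by (rule poly_eqI) (use hn in \<open>simp add: coeff_map_poly[of ?e, OF e0] macaulay_ideal_def\<close>)
    then have "map_poly ?e h ^ n = 0" by (simp add: map_poly_hom_power[OF he])
    then have "map_poly ?e h = 0" by simp
    then have "coeff (map_poly ?e h) k = 0" by simp
    then show "?e (coeff h k) = 0" by (simp add: coeff_map_poly[of ?e, OF e0])
  qed
qed



lemma LL_mult: "[:0,1:] * x = pCons 0 (x :: 'b::comm_ring_1 poly)" by simp

lemma LL_cancel: "([:0,1:] :: 'b::comm_ring_1 poly) ^ k * a = [:0,1:] ^ k * b \<Longrightarrow> a = b"
proof (induction k)
  case (Suc k)
  have e: "[:0,1:] ^ Suc k * c = pCons 0 ([:0,1:] ^ k * c)" for c :: "'b poly"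
    by (simp only: power_Suc mult.assoc) (rule LL_mult)
  have "pCons 0 ([:0,1:] ^ k * a) = pCons 0 ([:0,1:] ^ k * b)"
    using Suc.prems by (simp only: e)
  then show ?case using Suc.IH by simp
qed simp

lemma Ft_struct:
  fixes f :: "'a::comm_ring_1 mpoly4"
  assumes nz: "bicomp f imin \<noteq> 0" and low: "\<forall>i<imin. bicomp f i = 0"
    and ls: "lam_subst f = [:0,1:] ^ imin * Ft"
  shows "Ft = (\<Sum>i\<in>bideg1 ` Poly_Mapping.keys f. LL ^ (i - imin) * [:bicomp f i:])"
    and "\<exists>Y. Ft = [:bicomp f imin:] + LL * Y"
proof -
  let ?B = "bideg1 ` Poly_Mapping.keys f"
  define X where "X = (\<Sum>i\<in>?B. LL ^ (i - imin) * [:bicomp f i:])"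
  have "lam_subst f = (\<Sum>i\<in>?B. LL ^ i * [:bicomp f i:])" by (rule lam_subst_decomp)
  also have "\<dots> = (\<Sum>i\<in>?B. LL ^ imin * (LL ^ (i - imin) * [:bicomp f i:]))"
  proof (rule sum.cong[OF refl])
    fix i assume "i \<in> ?B"
    show "LL ^ i * [:bicomp f i:] = LL ^ imin * (LL ^ (i - imin) * [:bicomp f i:])"
    proof (cases "i < imin")
      case True then show ?thesis using low by simp
    next
      case False
      then have e: "LL ^ i = LL ^ imin * LL ^ (i - imin)" by (simp add: power_add[symmetric])
      show ?thesis by (simp only: e mult.assoc)
    qed
  qed
  also have "\<dots> = LL ^ imin * X" unfolding X_def by (rule sum_distrib_left[symmetric])
  finally have "LL ^ imin * Ft = LL ^ imin * X" using ls by simp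
  then have FX: "Ft = X" by (rule LL_cancel)
  then show "Ft = (\<Sum>i\<in>?B. LL ^ (i - imin) * [:bicomp f i:])" unfolding X_def .
  have inB: "imin \<in> ?B"
  proof -
    obtain m where "m \<in> Poly_Mapping.keys (bicomp f imin)" using nz keys_eq_empty by blast
    then show ?thesis by (auto simp: keys_bicomp)
  qed
  have "poly X 0 = (\<Sum>i\<in>?B. (if i = imin then bicomp f imin else 0))"
    unfolding X_def poly_sum
  proof (rule sum.cong[OF refl])
    fix i assume "i \<in> ?B"
    show "poly (LL ^ (i - imin) * [:bicomp f i:]) 0 = (if i = imin then bicomp f imin else 0)"
      using low by (cases "i < imin"; cases "i = imin") (auto simp: power_0_left)
  qed
  also have "\<dots> = bicomp f imin" using inB by simp
  finally have X0: "poly X 0 = bicomp f imin" .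
  obtain a X' where "X = pCons a X'" by (cases X)
  then have "X = [:bicomp f imin:] + LL * X'" using X0 by simp
  then show "\<exists>Y. Ft = [:bicomp f imin:] + LL * Y" using FX by blast
qed

theorem mainTheorem4:
  fixes f g :: "'a::field_char_0 mpoly4"
    and d1 d2 imin jmin :: nat
    and Ft Gt :: "'a mpoly4 poly"
  assumes "alg_closed TYPE('a)"
    and "f \<in> macaulay_ideal" and "g \<in> macaulay_ideal"
    and "homogeneous f d1" and "homogeneous g d2"
    and "radical (gen_ideal {f, g}) = macaulay_ideal"
    and "bicomp f imin \<noteq> 0" and "\<forall>i<imin. bicomp f i = 0"
    and "bicomp g jmin \<noteq> 0" and "\<forall>j<jmin. bicomp g j = 0"
    and "lam_subst f = [:0,1:] ^ imin * Ft"
    and "lam_subst g = [:0,1:] ^ jmin * Gt"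
  shows "radical (gen_ideal {Ft, Gt}) =
           radical (gen_ideal {[:0,1:], [:bicomp f imin:], [:bicomp g jmin:]})
           \<inter> gen_ideal ((\<lambda>p. [:p:]) ` macaulay_ideal)"
proof -
  define I where "I = gen_ideal {Ft, Gt}"
  define J where "J = gen_ideal {LL :: 'a mpoly4 poly, [:bicomp f imin:], [:bicomp g jmin:]}"
  define P where "P = gen_ideal ((\<lambda>p. [:p:]) ` (macaulay_ideal :: 'a mpoly4 set))"
  have Iid: "isideal I" unfolding I_def by (rule gen_ideal_isideal)
  have RIid: "isideal (radical I)" by (rule radical_isideal[OF Iid])
  have Jid: "isideal J" unfolding J_def by (rule gen_ideal_isideal)
  have Pid: "isideal P" unfolding P_def by (rule gen_ideal_isideal)
  have FtI: "Ft \<in> I" "Gt \<in> I" unfolding I_def by (auto intro: gen_ideal_base)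
  note Fs = Ft_struct[OF assms(7,8,11)]
  note Gs = Ft_struct[OF assms(9,10,12)]
  obtain Yf where Yf: "Ft = [:bicomp f imin:] + LL * Yf" using Fs(2) by blast
  obtain Yg where Yg: "Gt = [:bicomp g jmin:] + LL * Yg" using Gs(2) by blast
  have LJ: "LL \<in> J" "[:bicomp f imin:] \<in> J" "[:bicomp g jmin:] \<in> J"
    unfolding J_def by (auto intro: gen_ideal_base)
  have IJ: "I \<subseteq> J" unfolding I_def
  proof (rule gen_ideal_least[OF Jid])
    have "Ft \<in> J" unfolding Yf using LJ Jid by (intro isideal_add isideal_mult2) auto
    moreover have "Gt \<in> J" unfolding Yg using LJ Jid by (intro isideal_add isideal_mult2) auto
    ultimately show "{Ft, Gt} \<subseteq> J" by simp
  qed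
  have bicompP: "[:bicomp q i:] \<in> P" if "q \<in> macaulay_ideal" for q i
    unfolding P_def using bicomp_in_mac[OF that] by (intro gen_ideal_base) auto
  have IP: "I \<subseteq> P" unfolding I_def
  proof (rule gen_ideal_least[OF Pid])
    have "Ft \<in> P" unfolding Fs(1)
      using assms(2) by (intro isideal_sum[OF Pid] isideal_mult[OF Pid] bicompP)
    moreover have "Gt \<in> P" unfolding Gs(1)
      using assms(3) by (intro isideal_sum[OF Pid] isideal_mult[OF Pid] bicompP)
    ultimately show "{Ft, Gt} \<subseteq> P" by simp
  qed
  have fgI: "gen_ideal {f, g} \<subseteq> {q. lam_subst q \<in> I}"
  proof (rule gen_ideal_least)
    show "isideal {q. lam_subst q \<in> I}" unfolding isideal_def
      using Iid by (simp add: lam_subst_zero lam_subst_add lam_subst_mult isideal_add isideal_mult)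
        (simp add: isideal_def)
    show "{f, g} \<subseteq> {q. lam_subst q \<in> I}"
      using assms(11,12) FtI Iid by (simp add: isideal_mult)
  qed
  have lsrad: "lam_subst (bicomp q i) \<in> radical I" if "q \<in> macaulay_ideal" for q i
  proof -
    have "bicomp q i \<in> radical (gen_ideal {f, g})" using bicomp_in_mac[OF that] assms(6) by simp
    then obtain N where "bicomp q i ^ N \<in> gen_ideal {f, g}" unfolding radical_def by blast
    then have "lam_subst (bicomp q i ^ N) \<in> I" using fgI by blast
    then show ?thesis unfolding radical_def lam_subst_power by blast
  qed
  define K where "K = {x. \<exists>A. LL ^ A * x \<in> radical I}"
  have Kid: "isideal K" unfolding isideal_def
  proof (intro conjI ballI allI)
    show "0 \<in> K" unfolding K_def using RIid by (simp add: isideal_def)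
  next
    fix a b assume "a \<in> K" "b \<in> K"
    then obtain A B where a1: "LL ^ A * a \<in> radical I" and b1: "LL ^ B * b \<in> radical I" unfolding K_def by blast
    have "LL ^ B * (LL ^ A * a) + LL ^ A * (LL ^ B * b) \<in> radical I"
      by (rule isideal_add[OF RIid isideal_mult[OF RIid a1] isideal_mult[OF RIid b1]])
    moreover have "LL ^ B * (LL ^ A * a) + LL ^ A * (LL ^ B * b) = LL ^ (A + B) * (a + b)"
      by (simp add: power_add algebra_simps)
    ultimately show "a + b \<in> K" unfolding K_def by (metis (mono_tags, lifting) mem_Collect_eq)
  next
    fix r a assume "a \<in> K"
    then obtain A where "LL ^ A * a \<in> radical I" unfolding K_def by blast
    then have "r * (LL ^ A * a) \<in> radical I" by (rule isideal_mult[OF RIid])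
    then have "LL ^ A * (r * a) \<in> radical I" by (simp add: mult_ac)
    then show "r * a \<in> K" unfolding K_def by blast
  qed
  have PK: "P \<subseteq> K" unfolding P_def
  proof (rule gen_ideal_least[OF Kid], clarify)
    fix q :: "'a mpoly4" assume q: "q \<in> macaulay_ideal"
    let ?B = "bideg1 ` Poly_Mapping.keys q"
    define A where "A = Max (insert 0 ?B)"
    have Ai: "i \<le> A" if "i \<in> ?B" for i unfolding A_def using that by simp
    have "[:q:] = (\<Sum>i\<in>?B. [:bicomp q i:])"
      by (subst sum_bicomp[of q]) (rule const_sum)
    then have "LL ^ A * [:q:] = (\<Sum>i\<in>?B. LL ^ A * [:bicomp q i:])"
      by (simp add: sum_distrib_left)
    also have "\<dots> = (\<Sum>i\<in>?B. LL ^ (A - i) * lam_subst (bicomp q i))"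
    proof (rule sum.cong[OF refl])
      fix i assume "i \<in> ?B"
      then have e: "LL ^ A = LL ^ (A - i) * LL ^ i" using Ai by (simp add: power_add[symmetric])
      show "LL ^ A * [:bicomp q i:] = LL ^ (A - i) * lam_subst (bicomp q i)"
        by (simp only: e lam_subst_bicomp mult.assoc)
    qed
    also have "\<dots> \<in> radical I"
      using q by (intro isideal_sum[OF RIid] isideal_mult[OF RIid] lsrad)
    finally show "[:q:] \<in> K" unfolding K_def by blast
  qed
  define M where "M = {x. \<exists>u. x - LL * u \<in> I}"
  have Mid: "isideal M" unfolding isideal_def
  proof (intro conjI ballI allI)
    show "0 \<in> M" unfolding M_def using Iid by (intro CollectI exI[of _ 0]) (simp add: isideal_def)
  next
    fix a b assume "a \<in> M" "b \<in> M"
    then obtain u v where "a - LL * u \<in> I" "b - LL * v \<in> I" unfolding M_def by blast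
    then have "(a - LL * u) + (b - LL * v) \<in> I" by (intro isideal_add[OF Iid])
    moreover have "(a - LL * u) + (b - LL * v) = a + b - LL * (u + v)" by (simp add: algebra_simps)
    ultimately show "a + b \<in> M" unfolding M_def by (metis (mono_tags, lifting) mem_Collect_eq)
  next
    fix r a assume "a \<in> M"
    then obtain u where "a - LL * u \<in> I" unfolding M_def by blast
    then have "r * (a - LL * u) \<in> I" by (rule isideal_mult[OF Iid])
    moreover have "r * (a - LL * u) = r * a - LL * (r * u)" by (simp add: algebra_simps)
    ultimately show "r * a \<in> M" unfolding M_def by (metis (mono_tags, lifting) mem_Collect_eq)
  qed
  have JM: "J \<subseteq> M" unfolding J_def
  proof (rule gen_ideal_least[OF Mid])
    have "LL \<in> M" unfolding M_def using Iid by (intro CollectI exI[of _ 1]) (simp add: isideal_def)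
    moreover have "[:bicomp f imin:] \<in> M" unfolding M_def
    proof (intro CollectI exI[of _ "- Yf"])
      show "[:bicomp f imin:] - LL * - Yf \<in> I" using FtI(1) Yf by simp
    qed
    moreover have "[:bicomp g jmin:] \<in> M" unfolding M_def
    proof (intro CollectI exI[of _ "- Yg"])
      show "[:bicomp g jmin:] - LL * - Yg \<in> I" using FtI(2) Yg by simp
    qed
    ultimately show "{LL, [:bicomp f imin:], [:bicomp g jmin:]} \<subseteq> M" by simp
  qed
  have "radical I = radical J \<inter> P"
  proof
    show "radical I \<subseteq> radical J \<inter> P"
    proof
      fix x assume "x \<in> radical I"
      then obtain n where n: "x ^ n \<in> I" unfolding radical_def by blast
      then have "x ^ n \<in> J" using IJ by blast
      then have "x \<in> radical J" unfolding radical_def by blast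
      moreover have "x \<in> P" using n IP P_radical unfolding P_def by blast
      ultimately show "x \<in> radical J \<inter> P" by blast
    qed
  next
    show "radical J \<inter> P \<subseteq> radical I"
    proof
      fix x assume x: "x \<in> radical J \<inter> P"
      then obtain n where "x ^ n \<in> J" unfolding radical_def by blast
      then obtain u where u: "x ^ n - LL * u \<in> I" using JM unfolding M_def by blast
      obtain A where A: "LL ^ A * x \<in> radical I" using x PK unfolding K_def by blast
      have d: "(x ^ n) ^ A - (LL * u) ^ A \<in> I" by (rule pow_diff_ideal[OF Iid u])
      have p1: "(LL * u) ^ A = LL ^ A * u ^ A" by (rule power_mult_distrib)
      have p2: "x ^ (n * A + 1) = x * (x ^ n) ^ A" by (simp add: power_mult)
      have "x ^ (n * A + 1) = x * ((x ^ n) ^ A - (LL * u) ^ A) + (LL ^ A * x) * u ^ A"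
        by (simp only: p1 p2 right_diff_distrib) (simp only: mult_ac diff_add_cancel)
      also have "\<dots> \<in> radical I"
      proof (rule isideal_add[OF RIid])
        show "x * ((x ^ n) ^ A - (LL * u) ^ A) \<in> radical I"
          using isideal_mult[OF Iid d] radical_sub by blast
        show "LL ^ A * x * u ^ A \<in> radical I" using A RIid by (rule isideal_mult2[rotated])
      qed
      finally obtain N where "(x ^ (n * A + 1)) ^ N \<in> I" unfolding radical_def by blast
      then have "x ^ ((n * A + 1) * N) \<in> I" by (simp only: power_mult)
      then show "x \<in> radical I" unfolding radical_def by blast
    qed
  qed
  then show ?thesis unfolding I_def J_def P_def .
qed


end
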